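(* Let $\mathcal{I}\in\mathrm{Ins}(\Omega,\mathcal{H})$ and $\mathcal{J}\in\mathrm{Ins}(\Lambda,\mathcal{H},\mathcal{V})$ be instruments. Then: if $\mathcal{I}$ does not disturb $\mathcal{J}$, then $\mathsf{A}^{\mathcal{I}}$ does not disturb $\mathcal{J}$; if $\mathsf{A}^{\mathcal{I}}$ does not disturb $\mathcal{J}$, then $\mathsf{A}^{\mathcal{I}}$ and $\mathcal{J}$ are compatible; and if $\mathsf{A}^{\mathcal{I}}$ and $\mathcal{J}$ are compatible, then $\mathsf{A}^{\mathcal{I}}$ is compatible with $\Phi^{\mathcal{J}}$ and $\mathsf{A}^{\mathcal{I}}$ is compatible with $\mathsf{A}^{\mathcal{J}}$.
   Context: All Hilbert spaces are finite-dimensional and complex, and all outcome sets are finite. A POVM $\mathsf{A}\in\mathcal{O}(\Omega,\mathcal{H})$ is a map $x\mapsto \mathsf{A}(x)$ from $\Omega$ to positive operators on $\mathcal{H}$ with $\sum_x \mathsf{A}(x)=I$. An instrument $\mathcal{I}\in\mathrm{Ins}(\Omega,\mathcal{H},\mathcal{K})$ is a family $(\mathcal{I}_x)_{x\in\Omega}$ of completely positive trace-nonincreasing linear maps $\mathcal{L}(\mathcal{H})\to\mathcal{L}(\mathcal{K})$ such that $\Phi^{\mathcal{I}}:=\sum_x\mathcal{I}_x$ is trace preserving (the induced channel); its induced POVM $\mathsf{A}^{\mathcal{I}}$ is defined by $\mathrm{tr}[\mathsf{A}^{\mathcal{I}}(x)\varrho]=\mathrm{tr}[\mathcal{I}_x(\varrho)]$;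 $\mathrm{Ins}(\Omega,\mathcal{H}):=\mathrm{Ins}(\Omega,\mathcal{H},\mathcal{H})$. An instrument $\mathcal{I}\in\mathrm{Ins}(\Omega,\mathcal{H})$ does not disturb $\mathcal{J}\in\mathrm{Ins}(\Lambda,\mathcal{H},\mathcal{V})$ if $\mathcal{J}_y\circ\Phi^{\mathcal{I}}=\mathcal{J}_y$ for all $y$. A POVM $\mathsf{A}\in\mathcal{O}(\Omega,\mathcal{H})$ does not disturb $\mathcal{J}$ if some $\mathcal{I}'\in\mathrm{Ins}(\Omega,\mathcal{H})$ with $\mathsf{A}^{\mathcal{I}'}=\mathsf{A}$ does not disturb $\mathcal{J}$. Two instruments $\mathcal{I}\in\mathrm{Ins}(\Omega,\mathcal{H},\mathcal{K})$, $\mathcal{J}\in\mathrm{Ins}(\Lambda,\mathcal{H},\mathcal{V})$ are compatible if there is $\mathcal{G}\in\mathrm{Ins}(\Omega\times\Lambda,\mathcal{H},\mathcal{K}\otimes\mathcal{V})$ with $\sum_{x}\mathrm{tr}_{\mathcal{K}}[\mathcal{G}_{(x,y)}(\varrho)]=\mathcal{J}_y(\varrho)$ for all $y$ and $\sum_y\mathrm{tr}_{\mathcal{V}}[\mathcal{G}_{(x,y)}(\varrho)]=\mathcal{I}_x(\varrho)$ for all $x$, for all states $\varrho$. A POVM $\mathsf{A}\in\mathcal{O}(\Omega,\mathcal{H})$ is identified with the instrument in $\mathrm{Ins}(\Omega,\mathcal{H},\mathbb{C})$ given by $\varrho\mapsto\mathrm{tr}[\mathsf{A}(x)\varrho]$,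 and a channel with a one-outcome instrument; compatibility involving POVMs or channels is defined through these identifications. *)

theory Defs
  imports "HOL-Analysis.Analysis"
begin

text \<open>Finite-dimensional Hilbert spaces are modelled as complex^'h for a finite index
type 'h; operators on them as complex^'h^'h (row index first).  The tensor product
K (x) V has index type 'k \<times> 'v; the one-dimensional space C has index type 1.
Finite outcome sets are finite types.\<close>

type_synonym 'h op = "complex^'h^'h"

definition trace :: "'h::finite op \<Rightarrow> complex" where
  "trace M = (\<Sum>i\<in>UNIV. M $ i $ i)"

definition op_smult :: "complex \<Rightarrow> 'h::finite op \<Rightarrow> 'h op" where
  "op_smult c M = (\<chi> i j. c * M $ i $ j)"

definition psd :: "'h::finite op \<Rightarrow> bool" where
  "psd M \<longleftrightarrow> (\<forall>v::complex^'h.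
     Im (\<Sum>i\<in>UNIV. \<Sum>j\<in>UNIV. cnj (v $ i) * M $ i $ j * v $ j) = 0 \<and>
     Re (\<Sum>i\<in>UNIV. \<Sum>j\<in>UNIV. cnj (v $ i) * M $ i $ j * v $ j) \<ge> 0)"

text \<open>Positivity of an operator given as a function on an index set (used for ancilla spaces
of arbitrary finite dimension n, indexed by {..<n}).\<close>
definition psd_on :: "'a set \<Rightarrow> ('a \<Rightarrow> 'a \<Rightarrow> complex) \<Rightarrow> bool" where
  "psd_on I M \<longleftrightarrow> (\<forall>v::'a \<Rightarrow> complex.
     Im (\<Sum>p\<in>I. \<Sum>q\<in>I. cnj (v p) * M p q * v q) = 0 \<and>
     Re (\<Sum>p\<in>I. \<Sum>q\<in>I. cnj (v p) * M p q * v q) \<ge> 0)"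

definition is_state :: "'h::finite op \<Rightarrow> bool" where
  "is_state \<rho> \<longleftrightarrow> psd \<rho> \<and> trace \<rho> = 1"

definition linear_op_map :: "('h::finite op \<Rightarrow> 'k::finite op) \<Rightarrow> bool" where
  "linear_op_map \<Phi> \<longleftrightarrow> (\<forall>A B. \<Phi> (A + B) = \<Phi> A + \<Phi> B) \<and>
                         (\<forall>c A. \<Phi> (op_smult c A) = op_smult c (\<Phi> A))"

text \<open>id_n (x) \<Phi> applied to an operator on C^n (x) H (given as a function on
({..<n}) \<times> 'h).\<close>
definition ampl :: "('h::finite op \<Rightarrow> 'k::finite op) \<Rightarrow> (nat \<times> 'h \<Rightarrow> nat \<times> 'h \<Rightarrow> complex)
                    \<Rightarrow> (nat \<times> 'k \<Rightarrow> nat \<times> 'k \<Rightarrow> complex)" where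
  "ampl \<Phi> M = (\<lambda>(a, k) (b, l). \<Phi> (\<chi> i j. M (a, i) (b, j)) $ k $ l)"

definition completely_positive :: "('h::finite op \<Rightarrow> 'k::finite op) \<Rightarrow> bool" where
  "completely_positive \<Phi> \<longleftrightarrow>
     (\<forall>n::nat. \<forall>M. psd_on ({..<n} \<times> UNIV) M \<longrightarrow> psd_on ({..<n} \<times> UNIV) (ampl \<Phi> M))"

definition trace_preserving :: "('h::finite op \<Rightarrow> 'k::finite op) \<Rightarrow> bool" where
  "trace_preserving \<Phi> \<longleftrightarrow> (\<forall>\<rho>. trace (\<Phi> \<rho>) = trace \<rho>)"

definition trace_nonincreasing :: "('h::finite op \<Rightarrow> 'k::finite op) \<Rightarrow> bool" where
  "trace_nonincreasing \<Phi> \<longleftrightarrow> (\<forall>\<rho>. psd \<rho> \<longrightarrow> Re (trace (\<Phi> \<rho>)) \<le> Re (trace \<rho>))"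

definition induced_channel :: "('x::finite \<Rightarrow> 'h::finite op \<Rightarrow> 'k::finite op) \<Rightarrow> 'h op \<Rightarrow> 'k op" where
  "induced_channel I \<rho> = (\<Sum>x\<in>UNIV. I x \<rho>)"

definition instrument :: "('x::finite \<Rightarrow> 'h::finite op \<Rightarrow> 'k::finite op) \<Rightarrow> bool" where
  "instrument I \<longleftrightarrow>
     (\<forall>x. linear_op_map (I x) \<and> completely_positive (I x) \<and> trace_nonincreasing (I x)) \<and>
     trace_preserving (induced_channel I)"

definition povm :: "('x::finite \<Rightarrow> 'h::finite op) \<Rightarrow> bool" where
  "povm A \<longleftrightarrow> (\<forall>x. psd (A x)) \<and> (\<Sum>x\<in>UNIV. A x) = mat 1"

definition induced_povm :: "('x::finite \<Rightarrow> 'h::finite op \<Rightarrow> 'k::finite op) \<Rightarrow> 'x \<Rightarrow> 'h op" where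
  "induced_povm I x = (THE A. \<forall>\<rho>. trace (A ** \<rho>) = trace (I x \<rho>))"

text \<open>POVM identified with the instrument in Ins(\<Omega>,H,C), C = complex^1.\<close>
definition povm_ins :: "('x::finite \<Rightarrow> 'h::finite op) \<Rightarrow> 'x \<Rightarrow> 'h op \<Rightarrow> 1 op" where
  "povm_ins A x \<rho> = (\<chi> i j. trace (A x ** \<rho>))"

text \<open>Channel identified with a one-outcome instrument.\<close>
definition channel_ins :: "('h::finite op \<Rightarrow> 'k::finite op) \<Rightarrow> unit \<Rightarrow> 'h op \<Rightarrow> 'k op" where
  "channel_ins \<Phi> u = \<Phi>"

definition ptrace1 :: "('k::finite \<times> 'v::finite) op \<Rightarrow> 'v op" where
  "ptrace1 M = (\<chi> v v'. \<Sum>k\<in>UNIV. M $ (k, v) $ (k, v'))"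

definition ptrace2 :: "('k::finite \<times> 'v::finite) op \<Rightarrow> 'k op" where
  "ptrace2 M = (\<chi> k k'. \<Sum>v\<in>UNIV. M $ (k, v) $ (k', v))"

definition compatible ::
  "('x::finite \<Rightarrow> 'h::finite op \<Rightarrow> 'k::finite op) \<Rightarrow> ('y::finite \<Rightarrow> 'h op \<Rightarrow> 'v::finite op) \<Rightarrow> bool" where
  "compatible I J \<longleftrightarrow>
     (\<exists>G :: 'x \<times> 'y \<Rightarrow> 'h op \<Rightarrow> ('k \<times> 'v) op. instrument G \<and>
        (\<forall>\<rho>. is_state \<rho> \<longrightarrow>
           (\<forall>y. (\<Sum>x\<in>UNIV. ptrace1 (G (x, y) \<rho>)) = J y \<rho>) \<and>
           (\<forall>x. (\<Sum>y\<in>UNIV. ptrace2 (G (x, y) \<rho>)) = I x \<rho>)))"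

definition does_not_disturb ::
  "('x::finite \<Rightarrow> 'h::finite op \<Rightarrow> 'h op) \<Rightarrow> ('y::finite \<Rightarrow> 'h op \<Rightarrow> 'v::finite op) \<Rightarrow> bool" where
  "does_not_disturb I J \<longleftrightarrow> (\<forall>y. J y \<circ> induced_channel I = J y)"

definition povm_does_not_disturb ::
  "('x::finite \<Rightarrow> 'h::finite op) \<Rightarrow> ('y::finite \<Rightarrow> 'h op \<Rightarrow> 'v::finite op) \<Rightarrow> bool" where
  "povm_does_not_disturb A J \<longleftrightarrow>
     (\<exists>I' :: 'x \<Rightarrow> 'h op \<Rightarrow> 'h op. instrument I' \<and> induced_povm I' = A \<and> does_not_disturb I' J)"

end

theory Submission imports Defs begin

lemma move3: "(\<Sum>x\<in>X. \<Sum>y\<in>Y. \<Sum>z\<in>Z. f x y z) = (\<Sum>z\<in>Z. \<Sum>x\<in>X. \<Sum>y\<in>Y. f x y z)"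
proof -
  have "(\<Sum>x\<in>X. \<Sum>y\<in>Y. \<Sum>z\<in>Z. f x y z) = (\<Sum>x\<in>X. \<Sum>z\<in>Z. \<Sum>y\<in>Y. f x y z)"
    by (rule sum.cong[OF refl], rule sum.swap)
  also have "\<dots> = (\<Sum>z\<in>Z. \<Sum>x\<in>X. \<Sum>y\<in>Y. f x y z)" by (rule sum.swap)
  finally show ?thesis .
qed

lemma form_conj:
  fixes C :: "'k \<Rightarrow> 'p \<Rightarrow> complex"
  shows "(\<Sum>a\<in>A. \<Sum>k\<in>K. \<Sum>b\<in>A. \<Sum>l\<in>K. cnj (v a k) *
            (\<Sum>p\<in>P. \<Sum>q\<in>P. C k p * M a p b q * cnj (C l q)) * v b l)
       = (\<Sum>a\<in>A. \<Sum>p\<in>P. \<Sum>b\<in>A. \<Sum>q\<in>P.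
            cnj (\<Sum>k\<in>K. cnj (C k p) * v a k) * M a p b q * (\<Sum>l\<in>K. cnj (C l q) * v b l))" (is "?lhs = ?rhs")
proof -
  define T where "T a k b l p q = cnj (v a k) * C k p * M a p b q * cnj (C l q) * v b l" for a k b l p q
  have e1: "?lhs = (\<Sum>a\<in>A. \<Sum>k\<in>K. \<Sum>b\<in>A. \<Sum>l\<in>K. \<Sum>p\<in>P. \<Sum>q\<in>P. T a k b l p q)"
    by (simp add: T_def sum_distrib_left sum_distrib_right mult_ac)
  have e2: "?rhs = (\<Sum>a\<in>A. \<Sum>p\<in>P. \<Sum>b\<in>A. \<Sum>q\<in>P. \<Sum>k\<in>K. \<Sum>l\<in>K. T a k b l p q)"
    by (simp add: T_def cnj_sum sum_distrib_left sum_distrib_right mult_ac)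
  have "(\<Sum>a\<in>A. \<Sum>k\<in>K. \<Sum>b\<in>A. \<Sum>l\<in>K. \<Sum>p\<in>P. \<Sum>q\<in>P. T a k b l p q)
       = (\<Sum>a\<in>A. \<Sum>p\<in>P. \<Sum>b\<in>A. \<Sum>q\<in>P. \<Sum>k\<in>K. \<Sum>l\<in>K. T a k b l p q)"
  proof (rule sum.cong[OF refl])
    fix a assume "a \<in> A"
    have "(\<Sum>k\<in>K. \<Sum>b\<in>A. \<Sum>l\<in>K. \<Sum>p\<in>P. \<Sum>q\<in>P. T a k b l p q)
        = (\<Sum>k\<in>K. \<Sum>p\<in>P. \<Sum>b\<in>A. \<Sum>l\<in>K. \<Sum>q\<in>P. T a k b l p q)"
      by (rule sum.cong[OF refl], rule move3)
    also have "\<dots> = (\<Sum>p\<in>P. \<Sum>k\<in>K. \<Sum>b\<in>A. \<Sum>l\<in>K. \<Sum>q\<in>P. T a k b l p q)"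
      by (rule sum.swap)
    also have "\<dots> = (\<Sum>p\<in>P. \<Sum>b\<in>A. \<Sum>k\<in>K. \<Sum>l\<in>K. \<Sum>q\<in>P. T a k b l p q)"
      by (rule sum.cong[OF refl], rule sum.swap)
    also have "\<dots> = (\<Sum>p\<in>P. \<Sum>b\<in>A. \<Sum>q\<in>P. \<Sum>k\<in>K. \<Sum>l\<in>K. T a k b l p q)"
      by (rule sum.cong[OF refl], rule sum.cong[OF refl], rule move3)
    finally show "(\<Sum>k\<in>K. \<Sum>b\<in>A. \<Sum>l\<in>K. \<Sum>p\<in>P. \<Sum>q\<in>P. T a k b l p q)
        = (\<Sum>p\<in>P. \<Sum>b\<in>A. \<Sum>q\<in>P. \<Sum>k\<in>K. \<Sum>l\<in>K. T a k b l p q)" .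
  qed
  then show ?thesis using e1 e2 by simp
qed

definition qf :: "'a set \<Rightarrow> ('a \<Rightarrow> 'a \<Rightarrow> complex) \<Rightarrow> ('a \<Rightarrow> complex) \<Rightarrow> complex" where
  "qf I M v = (\<Sum>p\<in>I. \<Sum>q\<in>I. cnj (v p) * M p q * v q)"

lemma psd_on_qf: "psd_on I M \<longleftrightarrow> (\<forall>v. Im (qf I M v) = 0 \<and> Re (qf I M v) \<ge> 0)"
  unfolding psd_on_def qf_def by simp

lemma qf_prod: "qf (A \<times> B) M v = (\<Sum>a\<in>A. \<Sum>k\<in>B. \<Sum>b\<in>A. \<Sum>l\<in>B. cnj (v (a,k)) * M (a,k) (b,l) * v (b,l))"
proof -
  have pr: "sum F (A \<times> B) = (\<Sum>a\<in>A. \<Sum>k\<in>B. F (a,k))" for F :: "_ \<Rightarrow> complex"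
    by (simp add: sum.cartesian_product)
  show ?thesis unfolding qf_def pr sum_distrib_left by simp
qed

definition conjm :: "complex^'p^'k \<Rightarrow> 'p::finite op \<Rightarrow> 'k::finite op" where
  "conjm K M = (\<chi> i j. \<Sum>p\<in>UNIV. \<Sum>q\<in>UNIV. K$i$p * M$p$q * cnj (K$j$q))"

lemma cp_conjm:
  fixes K :: "complex^'p::finite^'k::finite"
  shows "completely_positive (conjm K)"
  unfolding completely_positive_def
proof (intro allI impI)
  fix n :: nat and M :: "nat \<times> 'p \<Rightarrow> nat \<times> 'p \<Rightarrow> complex" assume psd: "psd_on ({..<n} \<times> UNIV) M"
  show "psd_on ({..<n} \<times> UNIV) (ampl (conjm K) M)"
    unfolding psd_on_qf
  proof
    fix v :: "nat \<times> 'k \<Rightarrow> complex"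
    define w where "w = (\<lambda>(a,p). \<Sum>k\<in>UNIV. cnj (K$k$p) * v (a,k))"
    have "qf ({..<n} \<times> UNIV) (ampl (conjm K) M) v = qf ({..<n} \<times> UNIV) M w"
      unfolding qf_prod ampl_def conjm_def w_def
      using form_conj[where v="\<lambda>a k. v (a,k)" and C="\<lambda>k p. K$k$p" and M="\<lambda>a p b q. M (a,p) (b,q)" and K=UNIV and A="{..<n}" and P=UNIV]
      by simp
    then show "Im (qf ({..<n} \<times> UNIV) (ampl (conjm K) M) v) = 0 \<and> Re (qf ({..<n} \<times> UNIV) (ampl (conjm K) M) v) \<ge> 0"
      using psd unfolding psd_on_qf by simp
  qed
qed

lemma qf_one: "qf ({..<1::nat} \<times> UNIV) M v = (\<Sum>k\<in>UNIV. \<Sum>l\<in>UNIV. cnj (v (0,k)) * M (0,k) (0,l) * v (0,l))"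
proof -
  have e: "{..<1::nat} = {0}" by auto
  show ?thesis unfolding qf_prod e by simp
qed

lemma psd_cp:
  assumes cp: "completely_positive \<Phi>" and p: "psd \<rho>"
  shows "psd (\<Phi> \<rho>)"
proof -
  define M where "M = (\<lambda>(a::nat,i) (b::nat,j). \<rho>$i$j)"
  have "psd_on ({..<1} \<times> UNIV) M"
    unfolding psd_on_qf qf_one
  proof
    fix v :: "nat \<times> 'a \<Rightarrow> complex"
    show "Im (\<Sum>k\<in>UNIV. \<Sum>l\<in>UNIV. cnj (v (0, k)) * M (0, k) (0, l) * v (0, l)) = 0 \<and>
          0 \<le> Re (\<Sum>k\<in>UNIV. \<Sum>l\<in>UNIV. cnj (v (0, k)) * M (0, k) (0, l) * v (0, l))"
      using p[unfolded psd_def, rule_format, of "\<chi> k. v (0,k)"] by (simp add: M_def)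
  qed
  then have q: "psd_on ({..<1} \<times> UNIV) (ampl \<Phi> M)" using cp unfolding completely_positive_def by blast
  have "ampl \<Phi> M (0,k) (0,l) = \<Phi> \<rho> $ k $ l" for k l
    by (simp add: ampl_def M_def)
  then show ?thesis
    unfolding psd_def
  proof (intro allI)
    fix v :: "complex^'b"
    assume e: "\<And>k l. ampl \<Phi> M (0,k) (0,l) = \<Phi> \<rho> $ k $ l"
    show "Im (\<Sum>i\<in>UNIV. \<Sum>j\<in>UNIV. cnj (v $ i) * \<Phi> \<rho> $ i $ j * v $ j) = 0 \<and>
          0 \<le> Re (\<Sum>i\<in>UNIV. \<Sum>j\<in>UNIV. cnj (v $ i) * \<Phi> \<rho> $ i $ j * v $ j)"
      using q[unfolded psd_on_qf qf_one, rule_format, of "\<lambda>(a,k). v$k"] by (simp add: e)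
  qed
qed

lemma psd_trace: assumes "psd M" shows "Im (trace M) = 0 \<and> Re (trace M) \<ge> 0"
proof -
  have d: "Im (M$i$i) = 0 \<and> Re (M$i$i) \<ge> 0" for i
  proof -
    let ?e = "\<chi> j. if j = i then 1 else (0::complex)"
    have t: "cnj (?e$x) * M$x$y * ?e$y = (if y = i then (if x = i then M$i$i else 0) else 0)" for x y
      by simp
    have "(\<Sum>x\<in>UNIV. \<Sum>y\<in>UNIV. cnj (?e$x) * M$x$y * ?e$y) = M$i$i"
      unfolding t by simp
    then show ?thesis using assms[unfolded psd_def, rule_format, of ?e] by simp
  qed
  show ?thesis unfolding trace_def using d by (simp add: sum_nonneg)
qed

lemma op_smult_sum: "op_smult c (sum f S) = (\<Sum>x\<in>S. op_smult c (f x))"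
  by (simp add: vec_eq_iff op_smult_def sum_component sum_distrib_left)

lemma op_smult_add: "op_smult c (A + B) = op_smult c A + op_smult c B"
  by (simp add: vec_eq_iff op_smult_def algebra_simps)

lemma lin_zero: assumes "linear_op_map \<Phi>" shows "\<Phi> 0 = 0"
proof -
  have "\<Phi> (0 + 0) = \<Phi> 0 + \<Phi> 0" using assms unfolding linear_op_map_def by blast
  then show ?thesis by simp
qed

lemma lin_sum: assumes "linear_op_map \<Phi>" shows "\<Phi> (sum f S) = (\<Sum>x\<in>S. \<Phi> (f x))"
proof (induct S rule: infinite_finite_induct)
  case (infinite A) then show ?case using lin_zero[OF assms] by simp
next
  case empty then show ?case using lin_zero[OF assms] by simp
next
  case (insert x F) then show ?case using assms unfolding linear_op_map_def by simp
qed

lemma lin_smult: "linear_op_map \<Phi> \<Longrightarrow> \<Phi> (op_smult c A) = op_smult c (\<Phi> A)"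
  unfolding linear_op_map_def by blast

lemma lin_add: "linear_op_map \<Phi> \<Longrightarrow> \<Phi> (A + B) = \<Phi> A + \<Phi> B"
  unfolding linear_op_map_def by blast

lemma lin_comp: "linear_op_map \<Phi> \<Longrightarrow> linear_op_map \<Psi> \<Longrightarrow> linear_op_map (\<lambda>\<rho>. \<Phi> (\<Psi> \<rho>))"
  unfolding linear_op_map_def by simp

lemma lin_sumf: "(\<And>y. y \<in> S \<Longrightarrow> linear_op_map (F y)) \<Longrightarrow> linear_op_map (\<lambda>\<rho>. \<Sum>y\<in>S. F y \<rho>)"
  unfolding linear_op_map_def by (simp add: sum.distrib op_smult_sum)

lemma lin_conjm: "linear_op_map (conjm K)"
  unfolding linear_op_map_def conjm_def
  by (simp add: vec_eq_iff op_smult_def sum.distrib sum_distrib_left algebra_simps)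

lemma ampl_comp: "ampl (\<lambda>\<rho>. \<Phi> (\<Psi> \<rho>)) M = ampl \<Phi> (ampl \<Psi> M)"
  unfolding ampl_def by (intro ext) auto

lemma cp_comp: "completely_positive \<Phi> \<Longrightarrow> completely_positive \<Psi> \<Longrightarrow> completely_positive (\<lambda>\<rho>. \<Phi> (\<Psi> \<rho>))"
  unfolding completely_positive_def ampl_comp by blast

lemma psd_on_sum:
  assumes "\<And>y. y \<in> S \<Longrightarrow> psd_on I (M y)"
  shows "psd_on I (\<lambda>p q. \<Sum>y\<in>S. M y p q)"
  unfolding psd_on_qf
proof
  fix v
  have "qf I (\<lambda>p q. \<Sum>y\<in>S. M y p q) v = (\<Sum>y\<in>S. qf I (M y) v)"
    unfolding qf_def by (simp add: sum_distrib_left sum_distrib_right sum.swap[of _ S])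
  then show "Im (qf I (\<lambda>p q. \<Sum>y\<in>S. M y p q) v) = 0 \<and> Re (qf I (\<lambda>p q. \<Sum>y\<in>S. M y p q) v) \<ge> 0"
    using assms unfolding psd_on_qf by (simp add: sum_nonneg)
qed

lemma cp_sum:
  assumes "\<And>y. y \<in> S \<Longrightarrow> completely_positive (F y)"
  shows "completely_positive (\<lambda>\<rho>. \<Sum>y\<in>S. F y \<rho>)"
proof -
  have a: "ampl (\<lambda>\<rho>. \<Sum>y\<in>S. F y \<rho>) M = (\<lambda>p q. \<Sum>y\<in>S. ampl (F y) M p q)" for M
    unfolding ampl_def by (intro ext) (auto simp: sum_component)
  show ?thesis using assms unfolding completely_positive_def a
    by (intro allI impI psd_on_sum) blast
qed

lemma trace_add: "trace (A + B) = trace A + trace B"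
  unfolding trace_def by (simp add: sum.distrib)

lemma trace_sum: "trace (sum f S) = (\<Sum>x\<in>S. trace (f x))"
  unfolding trace_def by (simp add: sum_component sum.swap[of _ S])

lemma trace_smult: "trace (op_smult c A) = c * trace A"
  unfolding trace_def op_smult_def by (simp add: sum_distrib_left)

lemma ptrace1_sum: "ptrace1 (sum f S) = (\<Sum>x\<in>S. ptrace1 (f x))"
  unfolding ptrace1_def by (simp add: vec_eq_iff sum_component sum.swap[of _ S])

lemma ptrace2_sum: "ptrace2 (sum f S) = (\<Sum>x\<in>S. ptrace2 (f x))"
  unfolding ptrace2_def by (simp add: vec_eq_iff sum_component sum.swap[of _ S])

definition eu :: "'h::finite \<Rightarrow> 'h \<Rightarrow> 'h op" where
  "eu i j = (\<chi> a b. if a = i \<and> b = j then 1 else 0)"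

lemma decomp: "(\<rho>::'h::finite op) = (\<Sum>i\<in>UNIV. \<Sum>j\<in>UNIV. op_smult (\<rho>$i$j) (eu i j))"
proof -
  have "(\<Sum>i\<in>UNIV. \<Sum>j\<in>UNIV. op_smult (\<rho>$i$j) (eu i j)) $ a $ b = \<rho> $ a $ b" for a b
  proof -
    have t: "op_smult (\<rho>$i$j) (eu i j) $ a $ b = (if j = b then (if i = a then \<rho>$i$j else 0) else 0)" for i j
      by (auto simp: op_smult_def eu_def)
    show ?thesis by (simp add: sum_component t)
  qed
  then show ?thesis by (simp add: vec_eq_iff)
qed

lemma trace_eu: "trace ((B::'h::finite op) ** eu j i) = B$i$j"
proof -
  have t: "B$a$k * eu j i $ k $ a = (if k = j then (if a = i then B$i$j else 0) else 0)" for a k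
    by (auto simp: eu_def)
  show ?thesis unfolding trace_def matrix_matrix_mult_def by (simp add: t)
qed

lemma induced_povm_trace:
  fixes I :: "'x::finite \<Rightarrow> 'h::finite op \<Rightarrow> 'k::finite op"
  assumes lin: "linear_op_map (I x)"
  shows "trace (induced_povm I x ** \<rho>) = trace (I x \<rho>)"
proof -
  define A :: "'h op" where "A = (\<chi> i j. trace (I x (eu j i)))"
  have PA: "trace (A ** \<sigma>) = trace (I x \<sigma>)" for \<sigma>
  proof -
    have "trace (I x \<sigma>) = (\<Sum>i\<in>UNIV. \<Sum>j\<in>UNIV. \<sigma>$i$j * trace (I x (eu i j)))"
      apply (subst decomp[of \<sigma>])
      by (simp add: lin_sum[OF lin] lin_smult[OF lin] trace_sum trace_smult)
    also have "\<dots> = (\<Sum>j\<in>UNIV. \<Sum>i\<in>UNIV. \<sigma>$i$j * trace (I x (eu i j)))"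
      by (rule sum.swap)
    also have "\<dots> = trace (A ** \<sigma>)"
      unfolding trace_def matrix_matrix_mult_def A_def
      by (simp add: mult.commute)
    finally show ?thesis by simp
  qed
  have uniq: "B = A" if "\<forall>\<sigma>. trace (B ** \<sigma>) = trace (I x \<sigma>)" for B
  proof -
    have "B$i$j = A$i$j" for i j
      using that PA trace_eu by metis
    then show ?thesis by (simp add: vec_eq_iff)
  qed
  have "induced_povm I x = A"
    unfolding induced_povm_def
    by (rule the_equality) (use PA uniq in auto)
  then show ?thesis using PA by simp
qed

lemma sum_univ_prod: "sum F (UNIV :: ('a::finite \<times> 'b::finite) set) = (\<Sum>a\<in>UNIV. \<Sum>b\<in>UNIV. F (a, b))"
  by (simp add: sum.cartesian_product' UNIV_Times_UNIV[symmetric] del: UNIV_Times_UNIV)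

lemma sum_1v: "sum F (UNIV :: (1 \<times> 'v::finite) set) = (\<Sum>v\<in>UNIV. F (1, v))"
  by (simp add: sum.cartesian_product' UNIV_Times_UNIV[symmetric] del: UNIV_Times_UNIV)

lemma trace_1v: "trace (M :: (1 \<times> 'v::finite) op) = (\<Sum>v\<in>UNIV. M $ (1,v) $ (1,v))"
  by (simp add: trace_def sum_1v)

definition emb :: "'v::finite op \<Rightarrow> (1 \<times> 'v) op" where
  "emb = conjm (\<chi> i j. if snd i = j then 1 else 0)"

lemma emb_nth: "emb M $ i $ j = M $ snd i $ snd j"
proof -
  have t: "(if snd i = p then 1 else 0) * M $ p $ q * cnj (if snd j = q then 1 else (0::complex))
     = (if q = snd j then (if p = snd i then M $ p $ q else 0) else 0)" for p q
    by auto
  show ?thesis unfolding emb_def conjm_def by (simp add: t)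
qed

lemma lin_emb: "linear_op_map emb" unfolding emb_def by (rule lin_conjm)
lemma cp_emb: "completely_positive emb" unfolding emb_def by (rule cp_conjm)

lemma trace_emb: "trace (emb M) = trace M"
  unfolding trace_1v by (simp add: emb_nth trace_def)

lemma ptrace1_emb: "ptrace1 (emb M) = M"
  unfolding ptrace1_def by (simp add: emb_nth sum_1 vec_eq_iff)

lemma ptrace2_emb: "ptrace2 (emb M) = (\<chi> i j. trace M)"
  unfolding ptrace2_def by (simp add: emb_nth vec_eq_iff trace_def)

definition trT :: "(1 \<times> 'v::finite) op \<Rightarrow> (1 \<times> 1) op" where
  "trT M = (\<Sum>k\<in>UNIV. conjm (\<chi> (i::1\<times>1) (j::1\<times>'v). if snd j = k then 1 else 0) M)"

lemma trT_nth: "trT (M::(1\<times>'v::finite) op) $ i $ j = trace M"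
proof -
  have t: "(if snd p = k then 1 else 0) * M $ p $ q * cnj (if snd q = k then 1 else (0::complex))
     = (if snd q = k then (if snd p = k then M $ p $ q else 0) else 0)" for p q k
    by auto
  have "trT M $ i $ j = (\<Sum>k\<in>UNIV. \<Sum>p\<in>UNIV. \<Sum>q\<in>UNIV. (if snd q = k then (if snd p = k then M $ p $ q else 0) else 0))"
    unfolding trT_def conjm_def by (simp add: sum_component t)
  also have "\<dots> = trace M"
    unfolding sum_1v trace_1v by simp
  finally show ?thesis .
qed

lemma lin_trT: "linear_op_map trT"
  unfolding trT_def[abs_def] by (rule lin_sumf, rule lin_conjm)
lemma cp_trT: "completely_positive trT"
  unfolding trT_def[abs_def] by (rule cp_sum, rule cp_conjm)

lemma trace_trT: "trace (trT M) = trace M"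
  by (simp add: trace_def[of "trT M"] trT_nth sum_univ_prod)

lemma ptrace1_trT: "ptrace1 (trT M) = (\<chi> i j. trace M)"
  unfolding ptrace1_def by (simp add: trT_nth vec_eq_iff)

lemma ptrace2_trT: "ptrace2 (trT M) = (\<chi> i j. trace M)"
  unfolding ptrace2_def by (simp add: trT_nth vec_eq_iff)

lemma trace_ptrace1: "trace (ptrace1 (M::('k::finite\<times>'v::finite) op)) = trace M"
proof -
  have "trace (ptrace1 M) = (\<Sum>v\<in>UNIV. \<Sum>k\<in>UNIV. M $ (k,v) $ (k,v))"
    unfolding trace_def ptrace1_def by simp
  also have "\<dots> = (\<Sum>k\<in>UNIV. \<Sum>v\<in>UNIV. M $ (k,v) $ (k,v))" by (rule sum.swap)
  also have "\<dots> = trace M" unfolding trace_def sum_univ_prod ..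
  finally show ?thesis .
qed

lemma ptrace2_1v: "ptrace2 (M :: (1 \<times> 'v::finite) op) $ i $ j = trace M"
  unfolding ptrace2_def trace_1v by (simp add: num1_eq1[of i] num1_eq1[of j])

lemma instrumentD:
  assumes "instrument I"
  shows "linear_op_map (I x)" "completely_positive (I x)"
    "psd \<rho> \<Longrightarrow> Re (trace (I x \<rho>)) \<le> Re (trace \<rho>)"
    "(\<Sum>x\<in>UNIV. trace (I x \<rho>)) = trace \<rho>"
proof -
  show "linear_op_map (I x)" "completely_positive (I x)"
    using assms unfolding instrument_def by blast+
  show "psd \<rho> \<Longrightarrow> Re (trace (I x \<rho>)) \<le> Re (trace \<rho>)"
    using assms unfolding instrument_def trace_nonincreasing_def by blast
  have "trace (induced_channel I \<rho>) = trace \<rho>"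
    using assms unfolding instrument_def trace_preserving_def by blast
  then show "(\<Sum>x\<in>UNIV. trace (I x \<rho>)) = trace \<rho>"
    unfolding induced_channel_def trace_sum .
qed

lemma instrumentI:
  assumes "\<And>x. linear_op_map (I x)" "\<And>x. completely_positive (I x)"
    "\<And>x \<rho>. psd \<rho> \<Longrightarrow> Re (trace (I x \<rho>)) \<le> Re (trace \<rho>)"
    "\<And>\<rho>. (\<Sum>x\<in>UNIV. trace (I x \<rho>)) = trace \<rho>"
  shows "instrument I"
  using assms unfolding instrument_def trace_nonincreasing_def trace_preserving_def induced_channel_def trace_sum
  by blast

lemma vec_sum_const: "(\<Sum>y\<in>S. (\<chi> i j. f y) :: 'a::finite op) = (\<chi> i j. \<Sum>y\<in>S. f y)"
  by (simp add: vec_eq_iff sum_component)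

lemma part2:
  fixes I :: "'x::finite \<Rightarrow> 'h::finite op \<Rightarrow> 'h op"
    and J :: "'y::finite \<Rightarrow> 'h op \<Rightarrow> 'v::finite op"
  assumes I: "instrument I" and J: "instrument J" and nd: "does_not_disturb I J"
  shows "compatible (povm_ins (induced_povm I)) J"
proof -
  define G :: "'x \<times> 'y \<Rightarrow> 'h op \<Rightarrow> (1 \<times> 'v) op" where
    "G = (\<lambda>(x,y) \<rho>. emb (J y (I x \<rho>)))"
  have Gxy: "G (x,y) = (\<lambda>\<rho>. emb (J y (I x \<rho>)))" for x y by (simp add: G_def)
  have "instrument G"
  proof (rule instrumentI)
    fix xy :: "'x \<times> 'y" obtain x y where xy: "xy = (x,y)" by fastforce
    show "linear_op_map (G xy)" unfolding xy Gxy
      by (rule lin_comp[OF lin_emb lin_comp[OF instrumentD(1)[OF J] instrumentD(1)[OF I]]])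
    show "completely_positive (G xy)" unfolding xy Gxy
      by (rule cp_comp[OF cp_emb cp_comp[OF instrumentD(2)[OF J] instrumentD(2)[OF I]]])
    fix \<rho> :: "'h op" assume p: "psd \<rho>"
    have "Re (trace (G xy \<rho>)) = Re (trace (J y (I x \<rho>)))" unfolding xy Gxy by (simp add: trace_emb)
    also have "\<dots> \<le> Re (trace (I x \<rho>))"
      by (rule instrumentD(3)[OF J psd_cp[OF instrumentD(2)[OF I] p]])
    also have "\<dots> \<le> Re (trace \<rho>)" by (rule instrumentD(3)[OF I p])
    finally show "Re (trace (G xy \<rho>)) \<le> Re (trace \<rho>)" .
  next
    fix \<rho> :: "'h op"
    have "(\<Sum>xy\<in>UNIV. trace (G xy \<rho>)) = (\<Sum>x\<in>UNIV. \<Sum>y\<in>UNIV. trace (J y (I x \<rho>)))"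
      unfolding sum_univ_prod Gxy by (simp add: trace_emb)
    also have "\<dots> = (\<Sum>x\<in>UNIV. trace (I x \<rho>))" by (simp add: instrumentD(4)[OF J])
    also have "\<dots> = trace \<rho>" by (rule instrumentD(4)[OF I])
    finally show "(\<Sum>xy\<in>UNIV. trace (G xy \<rho>)) = trace \<rho>" .
  qed
  moreover have "(\<Sum>x\<in>UNIV. ptrace1 (G (x, y) \<rho>)) = J y \<rho>" for y \<rho>
  proof -
    have "(\<Sum>x\<in>UNIV. ptrace1 (G (x, y) \<rho>)) = J y (induced_channel I \<rho>)"
      unfolding Gxy ptrace1_emb induced_channel_def lin_sum[OF instrumentD(1)[OF J]] ..
    also have "\<dots> = J y \<rho>"
    proof -
      have "(J y \<circ> induced_channel I) \<rho> = J y \<rho>" using nd unfolding does_not_disturb_def by simp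
      then show ?thesis by simp
    qed
    finally show ?thesis .
  qed
  moreover have "(\<Sum>y\<in>UNIV. ptrace2 (G (x, y) \<rho>)) = povm_ins (induced_povm I) x \<rho>" for x \<rho>
  proof -
    have "(\<Sum>y\<in>UNIV. ptrace2 (G (x, y) \<rho>)) = (\<chi> i j. \<Sum>y\<in>UNIV. trace (J y (I x \<rho>)))"
      unfolding Gxy ptrace2_emb vec_sum_const ..
    also have "\<dots> = (\<chi> i j. trace (I x \<rho>))" by (simp add: instrumentD(4)[OF J])
    also have "\<dots> = povm_ins (induced_povm I) x \<rho>"
      unfolding povm_ins_def induced_povm_trace[OF instrumentD(1)[OF I]] ..
    finally show ?thesis .
  qed
  ultimately show ?thesis unfolding compatible_def by blast
qed

lemma psd_trace_instr:
  assumes "instrument G" "psd \<rho>"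
  shows "Im (trace (G x \<rho>)) = 0 \<and> Re (trace (G x \<rho>)) \<ge> 0"
  by (rule psd_trace[OF psd_cp[OF instrumentD(2)[OF assms(1)] assms(2)]])

lemma part3a:
  fixes A :: "'x::finite \<Rightarrow> 'h::finite op"
    and J :: "'y::finite \<Rightarrow> 'h op \<Rightarrow> 'v::finite op"
  assumes c: "compatible (povm_ins A) J"
  shows "compatible (povm_ins A) (channel_ins (induced_channel J))"
proof -
  obtain G :: "'x \<times> 'y \<Rightarrow> 'h op \<Rightarrow> (1 \<times> 'v) op" where
    G: "instrument G" and m1: "\<And>\<rho> y. is_state \<rho> \<Longrightarrow> (\<Sum>x\<in>UNIV. ptrace1 (G (x, y) \<rho>)) = J y \<rho>"
    and m2: "\<And>\<rho> x. is_state \<rho> \<Longrightarrow> (\<Sum>y\<in>UNIV. ptrace2 (G (x, y) \<rho>)) = povm_ins A x \<rho>"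
    using c unfolding compatible_def by blast
  define G' :: "'x \<times> unit \<Rightarrow> 'h op \<Rightarrow> (1 \<times> 'v) op" where
    "G' = (\<lambda>(x,u) \<rho>. \<Sum>y\<in>UNIV. G (x,y) \<rho>)"
  have G'xu: "G' (x,u) = (\<lambda>\<rho>. \<Sum>y\<in>UNIV. G (x,y) \<rho>)" for x u by (simp add: G'_def)
  have "instrument G'"
  proof (rule instrumentI)
    fix xu :: "'x \<times> unit" obtain x u where xu: "xu = (x,u)" by (cases xu) blast
    show "linear_op_map (G' xu)" unfolding xu G'xu
      by (rule lin_sumf, rule instrumentD(1)[OF G])
    show "completely_positive (G' xu)" unfolding xu G'xu
      by (rule cp_sum, rule instrumentD(2)[OF G])
    fix \<rho> :: "'h op" assume p: "psd \<rho>"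
    have "Re (trace (G' xu \<rho>)) = (\<Sum>y\<in>UNIV. Re (trace (G (x,y) \<rho>)))"
      unfolding xu G'xu by (simp add: trace_sum)
    also have "\<dots> \<le> (\<Sum>x'\<in>UNIV. \<Sum>y\<in>UNIV. Re (trace (G (x',y) \<rho>)))"
      by (rule member_le_sum) (auto intro!: sum_nonneg simp: psd_trace_instr[OF G p])
    also have "\<dots> = Re (\<Sum>xy\<in>UNIV. trace (G xy \<rho>))"
      by (simp add: sum_univ_prod)
    also have "\<dots> = Re (trace \<rho>)" by (simp add: instrumentD(4)[OF G])
    finally show "Re (trace (G' xu \<rho>)) \<le> Re (trace \<rho>)" .
  next
    fix \<rho> :: "'h op"
    have "(\<Sum>xu\<in>UNIV. trace (G' xu \<rho>)) = (\<Sum>x\<in>UNIV. \<Sum>y\<in>UNIV. trace (G (x,y) \<rho>))"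
      unfolding sum_univ_prod G'xu by (simp add: trace_sum)
    also have "\<dots> = trace \<rho>" using instrumentD(4)[OF G] by (simp add: sum_univ_prod)
    finally show "(\<Sum>xu\<in>UNIV. trace (G' xu \<rho>)) = trace \<rho>" .
  qed
  moreover have "(\<Sum>x\<in>UNIV. ptrace1 (G' (x, u) \<rho>)) = channel_ins (induced_channel J) u \<rho>"
    if s: "is_state \<rho>" for u \<rho>
  proof -
    have "(\<Sum>x\<in>UNIV. ptrace1 (G' (x, u) \<rho>)) = (\<Sum>x\<in>UNIV. \<Sum>y\<in>UNIV. ptrace1 (G (x,y) \<rho>))"
      unfolding G'xu ptrace1_sum ..
    also have "\<dots> = (\<Sum>y\<in>UNIV. \<Sum>x\<in>UNIV. ptrace1 (G (x,y) \<rho>))" by (rule sum.swap)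
    also have "\<dots> = (\<Sum>y\<in>UNIV. J y \<rho>)" using m1[OF s] by simp
    finally show ?thesis unfolding channel_ins_def induced_channel_def .
  qed
  moreover have "(\<Sum>u\<in>UNIV. ptrace2 (G' (x, u) \<rho>)) = povm_ins A x \<rho>"
    if s: "is_state \<rho>" for x \<rho>
    unfolding G'xu ptrace2_sum using m2[OF s] by simp
  ultimately show ?thesis unfolding compatible_def by blast
qed

lemma part3b:
  fixes A :: "'x::finite \<Rightarrow> 'h::finite op"
    and J :: "'y::finite \<Rightarrow> 'h op \<Rightarrow> 'v::finite op"
  assumes c: "compatible (povm_ins A) J" and J: "instrument J"
  shows "compatible (povm_ins A) (povm_ins (induced_povm J))"
proof -
  obtain G :: "'x \<times> 'y \<Rightarrow> 'h op \<Rightarrow> (1 \<times> 'v) op" where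
    G: "instrument G" and m1: "\<And>\<rho> y. is_state \<rho> \<Longrightarrow> (\<Sum>x\<in>UNIV. ptrace1 (G (x, y) \<rho>)) = J y \<rho>"
    and m2: "\<And>\<rho> x. is_state \<rho> \<Longrightarrow> (\<Sum>y\<in>UNIV. ptrace2 (G (x, y) \<rho>)) = povm_ins A x \<rho>"
    using c unfolding compatible_def by blast
  define G' :: "'x \<times> 'y \<Rightarrow> 'h op \<Rightarrow> (1 \<times> 1) op" where
    "G' = (\<lambda>xy \<rho>. trT (G xy \<rho>))"
  have "instrument G'"
  proof (rule instrumentI)
    fix xy :: "'x \<times> 'y"
    show "linear_op_map (G' xy)" unfolding G'_def
      by (rule lin_comp[OF lin_trT instrumentD(1)[OF G]])
    show "completely_positive (G' xy)" unfolding G'_def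
      by (rule cp_comp[OF cp_trT instrumentD(2)[OF G]])
    fix \<rho> :: "'h op" assume p: "psd \<rho>"
    show "Re (trace (G' xy \<rho>)) \<le> Re (trace \<rho>)"
      unfolding G'_def trace_trT by (rule instrumentD(3)[OF G p])
  next
    fix \<rho> :: "'h op"
    show "(\<Sum>xy\<in>UNIV. trace (G' xy \<rho>)) = trace \<rho>"
      unfolding G'_def trace_trT by (rule instrumentD(4)[OF G])
  qed
  moreover have "(\<Sum>x\<in>UNIV. ptrace1 (G' (x, y) \<rho>)) = povm_ins (induced_povm J) y \<rho>"
    if s: "is_state \<rho>" for y \<rho>
  proof -
    have "(\<Sum>x\<in>UNIV. ptrace1 (G' (x, y) \<rho>)) = (\<chi> i j. \<Sum>x\<in>UNIV. trace (G (x,y) \<rho>))"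
      unfolding G'_def ptrace1_trT vec_sum_const ..
    also have "\<dots> = (\<chi> i j. trace (\<Sum>x\<in>UNIV. ptrace1 (G (x,y) \<rho>)))"
      unfolding trace_sum trace_ptrace1 ..
    also have "\<dots> = (\<chi> i j. trace (J y \<rho>))" using m1[OF s] by simp
    also have "\<dots> = povm_ins (induced_povm J) y \<rho>"
      unfolding povm_ins_def induced_povm_trace[OF instrumentD(1)[OF J]] ..
    finally show ?thesis .
  qed
  moreover have "(\<Sum>y\<in>UNIV. ptrace2 (G' (x, y) \<rho>)) = povm_ins A x \<rho>"
    if s: "is_state \<rho>" for x \<rho>
  proof -
    have "(\<Sum>y\<in>UNIV. ptrace2 (G' (x, y) \<rho>)) = (\<chi> i j. \<Sum>y\<in>UNIV. trace (G (x,y) \<rho>))"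
      unfolding G'_def ptrace2_trT vec_sum_const ..
    also have "\<dots> = povm_ins A x \<rho>"
    proof -
      have "povm_ins A x \<rho> $ i $ j = (\<Sum>y\<in>UNIV. trace (G (x,y) \<rho>))" for i j
        unfolding m2[OF s, symmetric] by (simp add: sum_component ptrace2_1v)
      then show ?thesis by (simp add: vec_eq_iff)
    qed
    finally show ?thesis .
  qed
  ultimately show ?thesis unfolding compatible_def by blast
qed

theorem corollary2:
  fixes I :: "'x::finite \<Rightarrow> 'h::finite op \<Rightarrow> 'h op"
    and J :: "'y::finite \<Rightarrow> 'h op \<Rightarrow> 'v::finite op"
  assumes "instrument I" and "instrument J"
  shows "(does_not_disturb I J \<longrightarrow> povm_does_not_disturb (induced_povm I) J) \<and>
         (povm_does_not_disturb (induced_povm I) J \<longrightarrow>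
            compatible (povm_ins (induced_povm I)) J) \<and>
         (compatible (povm_ins (induced_povm I)) J \<longrightarrow>
            compatible (povm_ins (induced_povm I)) (channel_ins (induced_channel J)) \<and>
            compatible (povm_ins (induced_povm I)) (povm_ins (induced_povm J)))"
proof (intro conjI impI)
  assume "does_not_disturb I J"
  then show "povm_does_not_disturb (induced_povm I) J"
    unfolding povm_does_not_disturb_def using assms(1) by blast
next
  assume "povm_does_not_disturb (induced_povm I) J"
  then obtain I' :: "'x \<Rightarrow> 'h op \<Rightarrow> 'h op" where "instrument I'" "induced_povm I' = induced_povm I"
    "does_not_disturb I' J" unfolding povm_does_not_disturb_def by blast
  then show "compatible (povm_ins (induced_povm I)) J" using part2[OF _ assms(2)] by metis
next
  assume "compatible (povm_ins (induced_povm I)) J"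
  then show "compatible (povm_ins (induced_povm I)) (channel_ins (induced_channel J))"
    by (rule part3a)
next
  assume "compatible (povm_ins (induced_povm I)) J"
  then show "compatible (povm_ins (induced_povm I)) (povm_ins (induced_povm J))"
    by (rule part3b[OF _ assms(2)])
qed

end
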